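(* Let $\ell\ge 1$, let $k_1$ be a nonnegative integer and $k_2,\ldots,k_\ell$ positive integers, and let $D$ be a digraph with $\delta^+(D)\geq \sum_{i=1}^{\ell} k_i$. Then for every vertex $v\in V(D)$, $D$ contains (as a subdigraph) a path $P(k'_1,k'_2,\ldots,k'_\ell)$ with initial vertex $v$ such that $k'_i\ge k_i$ for every odd $i$ and $k'_i=k_i$ for every even $i$.
   Context: $\delta^+(D)$ denotes the minimum out-degree of $D$. For a nonnegative integer $k_1$ and positive integers $k_2,\ldots,k_\ell$, $P(k_1,\ldots,k_\ell)$ denotes the oriented path obtained from an undirected path $v_1v_2\ldots v_{\ell+1}$ by replacing, for each $i\in\{1,\ldots,\ell\}$, the edge $v_iv_{i+1}$ by a directed path of length $k_i$ from $v_i$ to $v_{i+1}$ if $i$ is odd, and from $v_{i+1}$ to $v_i$ if $i$ is even (if $k_1=0$ then $v_1=v_2$). Its initial vertex is $v_1$. *)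

theory Defs
  imports Main
begin

definition digraph :: "'a set \<Rightarrow> ('a \<times> 'a) set \<Rightarrow> bool" where
  "digraph V A \<longleftrightarrow> finite V \<and> A \<subseteq> V \<times> V \<and> (\<forall>x. (x, x) \<notin> A)"

definition outdeg :: "('a \<times> 'a) set \<Rightarrow> 'a \<Rightarrow> nat" where
  "outdeg A u = card {w. (u, w) \<in> A}"

definition min_outdeg :: "'a set \<Rightarrow> ('a \<times> 'a) set \<Rightarrow> nat" where
  "min_outdeg V A = Min (outdeg A ` V)"

text \<open>Orientation of the edges of P(k_1,...,k_l): list index j (0-based) is block i = j+1;
  block i is traversed forwards (True) iff i is odd, i.e. iff j is even.\<close>

definition edge_dirs :: "nat list \<Rightarrow> bool list" where
  "edge_dirs ks = concat (map (\<lambda>j. replicate (ks ! j) (even j)) [0..<length ks])"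

definition is_P_path :: "'a set \<Rightarrow> ('a \<times> 'a) set \<Rightarrow> nat list \<Rightarrow> 'a list \<Rightarrow> bool" where
  "is_P_path V A ks xs \<longleftrightarrow>
     distinct xs \<and> set xs \<subseteq> V \<and> length xs = sum_list ks + 1 \<and>
     (\<forall>e < sum_list ks.
        (if edge_dirs ks ! e then (xs ! e, xs ! (e + 1)) \<in> A
         else (xs ! (e + 1), xs ! e) \<in> A))"

end

theory Submission
  imports Defs
begin


definition pok :: "('a \<times> 'a) set \<Rightarrow> bool list \<Rightarrow> 'a list \<Rightarrow> bool" where
  "pok A ds xs \<longleftrightarrow> length xs = Suc (length ds) \<and>
     (\<forall>e < length ds. if ds ! e then (xs ! e, xs ! Suc e) \<in> A else (xs ! Suc e, xs ! e) \<in> A)"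

lemma edge_dirs_Nil[simp]: "edge_dirs [] = []"
  by (simp add: edge_dirs_def)

lemma edge_dirs_Cons: "edge_dirs (a # ks) = replicate a True @ map Not (edge_dirs ks)"
proof -
  have "[0..<length (a#ks)] = 0 # map Suc [0..<length ks]"
    using upt_conv_Cons[of 0 "Suc (length ks)"] map_Suc_upt[of 0 "length ks"] by simp
  then show ?thesis
    by (simp add: edge_dirs_def map_concat comp_def)
qed

lemma length_edge_dirs[simp]: "length (edge_dirs ks) = sum_list ks"
  by (induction ks) (auto simp: edge_dirs_Cons)

lemma edge_dirs_Cons2: "edge_dirs (a # b # ks) = replicate a True @ replicate b False @ edge_dirs ks"
  by (simp add: edge_dirs_Cons comp_def)

lemma edge_dirs_Suc: "edge_dirs (Suc a # ks) = True # edge_dirs (a # ks)"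
  by (simp add: edge_dirs_Cons)

lemma nth_append_tl:
  assumes "xs \<noteq> []" "ys \<noteq> []" "last xs = hd ys" "e \<ge> length xs - 1"
  shows "(xs @ tl ys) ! e = ys ! (e - (length xs - 1))"
proof (cases "e = length xs - 1")
  case True
  then show ?thesis using assms
    by (simp add: nth_append last_conv_nth hd_conv_nth)
next
  case False
  then have "e \<ge> length xs" using assms by auto
  have "(xs @ tl ys) ! e = tl ys ! (e - length xs)" using \<open>e \<ge> length xs\<close> by (simp add: nth_append)
  also have "\<dots> = ys ! Suc (e - length xs)" using assms(2) by (cases ys) auto
  also have "Suc (e - length xs) = e - (length xs - 1)" using \<open>e \<ge> length xs\<close> assms(1) by (cases xs) auto
  finally show ?thesis .
qed

lemma pok_append:
  assumes "pok A d1 x1" "pok A d2 x2" "last x1 = hd x2"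
  shows "pok A (d1 @ d2) (x1 @ tl x2)"
proof -
  have l1: "length x1 = Suc (length d1)" and l2: "length x2 = Suc (length d2)"
    using assms by (auto simp: pok_def)
  have ne: "x1 \<noteq> []" "x2 \<noteq> []" using l1 l2 by auto
  show ?thesis unfolding pok_def
  proof (intro conjI allI impI)
    show "length (x1 @ tl x2) = Suc (length (d1 @ d2))" using l1 l2 by simp
  next
    fix e assume e: "e < length (d1 @ d2)"
    show "if (d1 @ d2) ! e then ((x1 @ tl x2) ! e, (x1 @ tl x2) ! Suc e) \<in> A
          else ((x1 @ tl x2) ! Suc e, (x1 @ tl x2) ! e) \<in> A"
    proof (cases "e < length d1")
      case True
      then have "(x1 @ tl x2) ! e = x1 ! e" "(x1 @ tl x2) ! Suc e = x1 ! Suc e"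
        using l1 by (auto simp: nth_append)
      moreover have "(d1 @ d2) ! e = d1 ! e" using True by (simp add: nth_append)
      ultimately show ?thesis using assms(1) True by (simp add: pok_def)
    next
      case False
      define e' where "e' = e - length d1"
      have "e' < length d2" using e False by (simp add: e'_def)
      have "(x1 @ tl x2) ! e = x2 ! e'" "(x1 @ tl x2) ! Suc e = x2 ! Suc e'"
        using nth_append_tl[OF ne assms(3), of e] nth_append_tl[OF ne assms(3), of "Suc e"] False l1
        by (auto simp: e'_def Suc_diff_le)
      moreover have "(d1 @ d2) ! e = d2 ! e'" using False by (simp add: nth_append e'_def)
      ultimately show ?thesis using assms(2) \<open>e' < length d2\<close> by (simp add: pok_def)
    qed
  qed
qed

lemma pok_dpath:
  assumes "successively (\<lambda>x y. (x, y) \<in> A) xs" "xs \<noteq> []"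
  shows "pok A (replicate (length xs - 1) True) xs"
  using assms by (auto simp: pok_def successively_conv_nth)

lemma pok_rev:
  assumes "successively (\<lambda>x y. (x, y) \<in> A) xs" "xs \<noteq> []"
  shows "pok A (replicate (length xs - 1) False) (rev xs)"
proof -
  have "successively (\<lambda>x y. (y, x) \<in> A) (rev xs)" using assms by simp
  then show ?thesis using assms(2) by (auto simp: pok_def successively_conv_nth)
qed

lemma pok_is_P_path:
  assumes "pok A (edge_dirs ks) xs" "distinct xs" "set xs \<subseteq> V"
  shows "is_P_path V A ks xs"
  using assms by (simp add: pok_def is_P_path_def)

lemma is_P_path_pok:
  assumes "is_P_path V A ks xs"
  shows "pok A (edge_dirs ks) xs"
  using assms by (auto simp: pok_def is_P_path_def)



abbreviation dp :: "('a \<times> 'a) set \<Rightarrow> 'a list \<Rightarrow> bool" where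
  "dp A xs \<equiv> successively (\<lambda>x y. (x, y) \<in> A) xs"

lemma dp_take: "dp A xs \<Longrightarrow> dp A (take n xs)"
  using successively_append_iff[of _ "take n xs" "drop n xs"] by simp

lemma dp_drop: "dp A xs \<Longrightarrow> dp A (drop n xs)"
  using successively_append_iff[of _ "take n xs" "drop n xs"] by simp

lemma rotation:
  assumes "dp A C" "distinct C" "C \<noteq> []" "(last C, hd C) \<in> A" "c \<in> set C"
  shows "\<exists>Q. dp A Q \<and> distinct Q \<and> set Q = set C \<and> length Q = length C \<and> last Q = c"
proof -
  obtain t where t: "t < length C" "C ! t = c" using assms(5) by (auto simp: in_set_conv_nth)
  define Q where "Q = drop (Suc t) C @ take (Suc t) C"
  have "dp A (drop (Suc t) C)" "dp A (take (Suc t) C)" using assms(1) dp_take dp_drop by auto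
  moreover have "drop (Suc t) C \<noteq> [] \<Longrightarrow> last (drop (Suc t) C) = last C" by simp
  moreover have "hd (take (Suc t) C) = hd C" using assms(3) by (cases C) auto
  ultimately have "dp A Q" unfolding Q_def using assms(4)
    by (auto simp: successively_append_iff)
  moreover have "distinct Q" using assms(2) unfolding Q_def
    using distinct_append[of "take (Suc t) C" "drop (Suc t) C"] by auto
  moreover have "set Q = set C" unfolding Q_def
    using set_append[of "take (Suc t) C" "drop (Suc t) C"] by auto
  moreover have "length Q = length C" unfolding Q_def using t by simp
  moreover have "last Q = c" unfolding Q_def using t assms(3)
    by (simp add: take_Suc_conv_app_nth)
  ultimately show ?thesis by blast
qed

lemma inpath_aux:
  assumes "dp A C" "distinct C" "C \<noteq> []" "(last C, hd C) \<in> A" "(last C, x) \<in> A\<^sup>*"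
  shows "\<exists>Q. dp A Q \<and> distinct Q \<and> length C \<le> length Q \<and> set Q \<subseteq> {y. (last C, y) \<in> A\<^sup>*}
     \<and> set (take (length C) Q) = set C \<and> set (drop (length C) Q) \<inter> set C = {} \<and> last Q = x"
  using assms(5)
proof (induction rule: rtrancl_induct)
  case base
  have "set C \<subseteq> {y. (last C, y) \<in> A\<^sup>*}"
  proof
    fix y assume "y \<in> set C"
    then obtain t where t: "t < length C" "C ! t = y" by (auto simp: in_set_conv_nth)
    have "(last C, C ! t) \<in> A\<^sup>*" using t(1)
    proof (induction t)
      case 0
      then show ?case using assms(3,4) by (simp add: hd_conv_nth)
    next
      case (Suc t)
      then have "(C ! t, C ! Suc t) \<in> A" using assms(1) successively_nth by fastforce
      then show ?case using Suc by (meson Suc_lessD rtrancl.simps)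
    qed
    then show "y \<in> {y. (last C, y) \<in> A\<^sup>*}" using t by simp
  qed
  then show ?case using assms by (intro exI[of _ C]) auto
next
  case (step y x)
  then obtain Q where Q: "dp A Q" "distinct Q" "length C \<le> length Q" "set Q \<subseteq> {y. (last C, y) \<in> A\<^sup>*}"
     "set (take (length C) Q) = set C" "set (drop (length C) Q) \<inter> set C = {}" "last Q = y" by blast
  have xM: "(last C, x) \<in> A\<^sup>*" using step by auto
  show ?case
  proof (cases "x \<in> set C")
    case True
    obtain Q' where "dp A Q'" "distinct Q'" "set Q' = set C" "length Q' = length C" "last Q' = x"
      using rotation[OF assms(1-4) True] by blast
    moreover have "set C \<subseteq> {y. (last C, y) \<in> A\<^sup>*}" using Q(4,5) by (metis set_take_subset subset_trans)
    ultimately show ?thesis by (intro exI[of _ Q']) auto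
  next
    case xC: False
    show ?thesis
    proof (cases "x \<in> set Q")
      case True
      then obtain k where k: "k < length Q" "Q ! k = x" by (auto simp: in_set_conv_nth)
      have "k \<ge> length C"
      proof (rule ccontr)
        assume "\<not> k \<ge> length C"
        then have "x \<in> set (take (length C) Q)" using k by (auto simp: in_set_conv_nth)
        then show False using Q(5) xC by simp
      qed
      define Q' where "Q' = take (Suc k) Q"
      have "dp A Q'" using Q(1) dp_take Q'_def by auto
      moreover have "distinct Q'" using Q(2) Q'_def by simp
      moreover have "length C \<le> length Q'" using k \<open>k \<ge> length C\<close> Q'_def by simp
      moreover have "set Q' \<subseteq> {y. (last C, y) \<in> A\<^sup>*}" using Q(4) Q'_def
        by (meson set_take_subset subset_trans)
      moreover have "take (length C) Q' = take (length C) Q" using \<open>k \<ge> length C\<close> Q'_def by simp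
      moreover have "set (drop (length C) Q') \<subseteq> set (drop (length C) Q)" unfolding Q'_def
        by (metis drop_take set_take_subset)
      moreover have "last Q' = x" using k Q'_def by (simp add: take_Suc_conv_app_nth)
      ultimately show ?thesis using Q(5,6) by (intro exI[of _ Q']) auto
    next
      case False
      define Q' where "Q' = Q @ [x]"
      have Qne: "Q \<noteq> []" using Q(3) assms(3) by auto
      have "dp A Q'" using Q(1,7) step(2) Qne Q'_def by (simp add: successively_append_iff)
      moreover have "distinct Q'" using Q(2) False Q'_def by simp
      moreover have "length C \<le> length Q'" using Q(3) Q'_def by simp
      moreover have "set Q' \<subseteq> {y. (last C, y) \<in> A\<^sup>*}" using Q(4) xM Q'_def by auto
      moreover have "take (length C) Q' = take (length C) Q" using Q(3) Q'_def by simp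
      moreover have "drop (length C) Q' = drop (length C) Q @ [x]" using Q(3) Q'_def by simp
      moreover have "last Q' = x" using Q'_def by simp
      ultimately show ?thesis using Q(5,6) xC by (intro exI[of _ Q']) auto
    qed
  qed
qed

lemma maximal_path:
  assumes "digraph V A" "v \<in> V"
  shows "\<exists>X. X \<noteq> [] \<and> hd X = v \<and> distinct X \<and> set X \<subseteq> V \<and> dp A X \<and> (\<forall>w. (last X, w) \<in> A \<longrightarrow> w \<in> set X)"
proof -
  define P where "P = {X. X \<noteq> [] \<and> hd X = v \<and> distinct X \<and> set X \<subseteq> V \<and> dp A X}"
  have fin: "finite P"
    using finite_subset_distinct[of V] assms(1) unfolding digraph_def P_def
    by (rule_tac finite_subset[of _ "{xs. set xs \<subseteq> V \<and> distinct xs}"]) auto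
  have "[v] \<in> P" using assms(2) P_def by simp
  then have ne: "length ` P \<noteq> {}" by auto
  define n where "n = Max (length ` P)"
  have "n \<in> length ` P" using fin ne n_def by simp
  then obtain X where X: "X \<in> P" "length X = n" by auto
  have mx: "\<And>Y. Y \<in> P \<Longrightarrow> length Y \<le> n" using fin n_def by simp
  have "\<forall>w. (last X, w) \<in> A \<longrightarrow> w \<in> set X"
  proof (intro allI impI, rule ccontr)
    fix w assume w: "(last X, w) \<in> A" "w \<notin> set X"
    have "w \<in> V" using w assms(1) by (auto simp: digraph_def)
    then have "X @ [w] \<in> P" using X(1) w by (auto simp: P_def successively_append_iff)
    then show False using mx X(2) by fastforce
  qed
  then show ?thesis using X(1) P_def by blast
qed

lemma chord:
  assumes "digraph V A" "X \<noteq> []" "distinct X" "\<forall>w. (last X, w) \<in> A \<longrightarrow> w \<in> set X"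
    "K \<le> outdeg A (last X)" "1 \<le> K"
  shows "\<exists>j. j + K \<le> length X - 1 \<and> (last X, X ! j) \<in> A"
proof (rule ccontr)
  assume H: "\<not> ?thesis"
  define m where "m = length X - 1"
  define N where "N = {w. (last X, w) \<in> A}"
  have "N \<subseteq> set (drop (m + 1 - K) (take m X))"
  proof
    fix w assume "w \<in> N"
    then have wA: "(last X, w) \<in> A" by (simp add: N_def)
    then have "w \<in> set X" using assms(4) by blast
    then obtain t where t: "t < length X" "X ! t = w" by (auto simp: in_set_conv_nth)
    have "w \<noteq> last X" using wA assms(1) by (auto simp: digraph_def)
    then have "t \<noteq> m" using t assms(2) by (auto simp: m_def last_conv_nth)
    then have "t < m" using t m_def by simp
    have "\<not> t + K \<le> m" using H wA t m_def by blast
    then have "m + 1 - K \<le> t" by simp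
    then have "(drop (m + 1 - K) (take m X)) ! (t - (m + 1 - K)) = w"
      using \<open>t < m\<close> t by simp
    moreover have "t - (m + 1 - K) < length (drop (m + 1 - K) (take m X))"
      using \<open>t < m\<close> \<open>m + 1 - K \<le> t\<close> t m_def by simp
    ultimately show "w \<in> set (drop (m + 1 - K) (take m X))" by (metis nth_mem)
  qed
  then have "card N \<le> card (set (drop (m + 1 - K) (take m X)))" by (simp add: card_mono)
  also have "\<dots> \<le> length (drop (m + 1 - K) (take m X))" by (rule card_length)
  also have "\<dots> < K" using assms(6) m_def by simp
  finally show False using assms(5) by (simp add: outdeg_def N_def)
qed



lemma reach_V:
  assumes "digraph V A" "x \<in> V" "(x, y) \<in> A\<^sup>*" shows "y \<in> V"
  using assms(3) by induction (use assms in \<open>auto simp: digraph_def\<close>)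

lemma construct:
  assumes D: "digraph V A" and v: "v \<in> V" and deg: "\<forall>u\<in>V. K \<le> outdeg A u" and "k2 \<le> K" "1 \<le> k2"
  shows "\<exists>Y W S. Y \<noteq> [] \<and> hd Y = v \<and> distinct Y \<and> set Y \<subseteq> V \<and> dp A Y \<and>
   length W = Suc k2 \<and> distinct W \<and> set W \<subseteq> V \<and> dp A W \<and> last W = last Y \<and>
   set (butlast Y) \<subseteq> S \<and> set (tl W) \<subseteq> S \<and> hd W \<notin> S \<and> set W \<inter> set (butlast Y) = {} \<and>
   (\<forall>u w. u \<notin> S \<longrightarrow> (u, w) \<in> A \<longrightarrow> w \<in> S \<longrightarrow> w \<in> set (tl W))"
proof -
  obtain X where X: "X \<noteq> []" "hd X = v" "distinct X" "set X \<subseteq> V" "dp A X"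
    "\<forall>w. (last X, w) \<in> A \<longrightarrow> w \<in> set X"
    using maximal_path[OF D v] by blast
  have lastV: "last X \<in> V" using X(1,4) by auto
  obtain j where j: "j + K \<le> length X - 1" "(last X, X ! j) \<in> A"
    using chord[OF D X(1,3,6)] deg lastV assms(4,5) by fastforce
  have jl: "j < length X" using j(1) X(1) by (cases X) auto
  define C where "C = drop j X"
  have C: "C \<noteq> []" "distinct C" "dp A C" "last C = last X" "hd C = X ! j"
    using jl X(3,5) dp_drop by (auto simp: C_def hd_drop_conv_nth)
  have lenC: "Suc K \<le> length C" using j(1) jl by (simp add: C_def)
  define M where "M = {y. (last X, y) \<in> A\<^sup>*}"
  have jM: "X ! j \<in> M" using j(2) by (simp add: M_def)
  define i where "i = (LEAST t. t < length X \<and> X ! t \<in> M)"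
  have iprop: "i < length X \<and> X ! i \<in> M" unfolding i_def
    by (rule LeastI[of _ j]) (use jl jM in auto)
  have notM: "\<And>t. t < i \<Longrightarrow> X ! t \<notin> M"
  proof -
    fix t assume "t < i"
    then have "\<not> (t < length X \<and> X ! t \<in> M)" unfolding i_def by (rule not_less_Least)
    then show "X ! t \<notin> M" using \<open>t < i\<close> iprop by auto
  qed
  obtain Q where Q: "dp A Q" "distinct Q" "length C \<le> length Q" "set Q \<subseteq> M" "last Q = X ! i"
    using inpath_aux[OF C(3,2,1)] C(4,5) j(2) iprop unfolding M_def by force
  define W where "W = drop (length Q - Suc k2) Q"
  have W: "length W = Suc k2" "distinct W" "dp A W" "set W \<subseteq> M" "last W = X ! i"
    using Q lenC assms(4) dp_drop by (auto simp: W_def dest: in_set_dropD)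
  have MV: "M \<subseteq> V" using reach_V[OF D lastV] by (auto simp: M_def)
  define Y where "Y = take (Suc i) X"
  have Y: "Y \<noteq> []" "hd Y = v" "distinct Y" "set Y \<subseteq> V" "dp A Y" "last Y = X ! i"
    "butlast Y = take i X"
  proof -
    show "Y \<noteq> []" "hd Y = v" using X(1,2) by (auto simp: Y_def)
    show "distinct Y" "set Y \<subseteq> V" "dp A Y" using X(3,4,5) dp_take
      by (auto simp: Y_def dest: in_set_takeD)
    show "last Y = X ! i" "butlast Y = take i X" using iprop
      by (auto simp: Y_def take_Suc_conv_app_nth)
  qed
  define Anc where "Anc = {y. \<exists>t<i. (y, X ! t) \<in> A\<^sup>*}"
  define S where "S = Anc \<union> set (tl W)"
  have "set (butlast Y) \<subseteq> S"
  proof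
    fix y assume "y \<in> set (butlast Y)"
    then obtain t where "t < i" "y = X ! t" using Y(7) iprop by (auto simp: in_set_conv_nth)
    then show "y \<in> S" by (auto simp: S_def Anc_def)
  qed
  moreover have "set (tl W) \<subseteq> S" by (simp add: S_def)
  moreover have "hd W \<notin> S"
  proof
    assume "hd W \<in> S"
    moreover have "hd W \<notin> set (tl W)" using W(1,2) by (cases W) auto
    ultimately have "hd W \<in> Anc" by (simp add: S_def)
    then obtain t where t: "t < i" "(hd W, X ! t) \<in> A\<^sup>*" by (auto simp: Anc_def)
    have "hd W \<in> M" using W(1,4) by (cases W) auto
    then have "X ! t \<in> M" using t by (auto simp: M_def)
    then show False using notM t(1) by blast
  qed
  moreover have "set W \<inter> set (butlast Y) = {}"
  proof -
    have "set (butlast Y) \<inter> M = {}" using Y(7) notM iprop by (auto simp: in_set_conv_nth)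
    then show ?thesis using W(4) by blast
  qed
  moreover have "\<forall>u w. u \<notin> S \<longrightarrow> (u, w) \<in> A \<longrightarrow> w \<in> S \<longrightarrow> w \<in> set (tl W)"
  proof (intro allI impI)
    fix u w assume "u \<notin> S" "(u, w) \<in> A" "w \<in> S"
    show "w \<in> set (tl W)"
    proof (rule ccontr)
      assume "w \<notin> set (tl W)"
      then have "w \<in> Anc" using \<open>w \<in> S\<close> by (simp add: S_def)
      then have "u \<in> Anc" using \<open>(u, w) \<in> A\<close> by (auto simp: Anc_def intro: converse_rtrancl_into_rtrancl)
      then show False using \<open>u \<notin> S\<close> by (simp add: S_def)
    qed
  qed
  ultimately show ?thesis using Y W MV by (intro exI[of _ Y] exI[of _ W] exI[of _ S]) auto
qed



lemma pok_mono: "pok A' ds xs \<Longrightarrow> A' \<subseteq> A \<Longrightarrow> pok A ds xs"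
  by (auto simp: pok_def split: if_splits)

lemma last_append_tl: "xs \<noteq> [] \<Longrightarrow> ys \<noteq> [] \<Longrightarrow> last xs = hd ys \<Longrightarrow> last (xs @ tl ys) = last ys"
  by (cases ys) auto

lemma sub_digraph: "digraph V A \<Longrightarrow> digraph (V - S) (A \<inter> ((V - S) \<times> (V - S)))"
  by (auto simp: digraph_def)

lemma outdeg_sub:
  assumes "digraph V A" "u \<in> V - S" "\<forall>w. (u, w) \<in> A \<longrightarrow> w \<in> S \<longrightarrow> w \<in> T" "finite T"
  shows "outdeg A u - card T \<le> outdeg (A \<inter> ((V - S) \<times> (V - S))) u"
proof -
  define N where "N = {w. (u, w) \<in> A}"
  have "N - T \<subseteq> {w. (u, w) \<in> A \<inter> ((V - S) \<times> (V - S))}"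
    using assms(1-3) by (auto simp: N_def digraph_def)
  moreover have "finite {w. (u, w) \<in> A \<inter> ((V - S) \<times> (V - S))}"
    using assms(1) by (auto simp: digraph_def intro: finite_subset)
  ultimately have "card (N - T) \<le> outdeg (A \<inter> ((V - S) \<times> (V - S))) u"
    unfolding outdeg_def by (rule card_mono[rotated])
  moreover have "card N - card T \<le> card (N - T)" using assms(4) by (rule diff_card_le_card_Diff)
  ultimately show ?thesis by (simp add: outdeg_def N_def)
qed

definition G :: "'a set \<Rightarrow> ('a \<times> 'a) set \<Rightarrow> nat list \<Rightarrow> 'a \<Rightarrow> bool" where
  "G V A ks v \<longleftrightarrow> (\<exists>ks' xs. length ks' = length ks \<and>
           (\<forall>i < length ks. if even i then ks' ! i \<ge> ks ! i else ks' ! i = ks ! i) \<and>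
           is_P_path V A ks' xs \<and> hd xs = v)"

lemma main:
  "\<forall>ks (V :: 'a set) A v. length ks = n \<longrightarrow> digraph V A \<longrightarrow> v \<in> V \<longrightarrow>
     (\<forall>i. 1 \<le> i \<and> i < length ks \<longrightarrow> ks ! i > 0) \<longrightarrow> (\<forall>u\<in>V. sum_list ks \<le> outdeg A u) \<longrightarrow> G V A ks v"
proof (induction n rule: less_induct)
  case (less n)
  show ?case
  proof (intro allI impI)
    fix ks and V :: "'a set" and A v
    assume len: "length ks = n" and D: "digraph V A" and v: "v \<in> V"
      and pos: "\<forall>i. 1 \<le> i \<and> i < length ks \<longrightarrow> ks ! i > 0" and deg: "\<forall>u\<in>V. sum_list ks \<le> outdeg A u"
    show "G V A ks v"
    proof (cases ks)
      case Nil
      then show ?thesis using v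
        by (auto simp: G_def is_P_path_def intro!: exI[of _ "[]"] exI[of _ "[v]"])
    next
      case (Cons k1 rest)
      have posr: "\<forall>i<length rest. rest ! i > 0" using pos Cons by fastforce
      have lenr: "n = Suc (length rest)" using len Cons by simp
      have "\<forall>(V :: 'a set) A v. digraph V A \<longrightarrow> v \<in> V \<longrightarrow> (\<forall>u\<in>V. sum_list (k1 # rest) \<le> outdeg A u) \<longrightarrow> G V A (k1 # rest) v"
      proof (induction k1)
        case 0
        show ?case
        proof (intro allI impI)
          fix V :: "'a set" and A v
          assume D: "digraph V A" and v: "v \<in> V" and deg: "\<forall>u\<in>V. sum_list (0 # rest) \<le> outdeg A u"
          show "G V A (0 # rest) v"
          proof (cases rest)
            case Nil
            have "is_P_path V A [0] [v]" using v by (simp add: is_P_path_def edge_dirs_Cons)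
            then show ?thesis unfolding G_def using Nil
              by (intro exI[of _ "[0]"] exI[of _ "[v]"]) auto
          next
            case (Cons k2 rest2)
            have k2pos: "1 \<le> k2" using posr Cons by fastforce
            have degK: "\<forall>u\<in>V. k2 + sum_list rest2 \<le> outdeg A u" using deg Cons by simp
            obtain Y W S where YW: "Y \<noteq> []" "hd Y = v" "distinct Y" "set Y \<subseteq> V" "dp A Y"
              "length W = Suc k2" "distinct W" "set W \<subseteq> V" "dp A W" "last W = last Y"
              "set (butlast Y) \<subseteq> S" "set (tl W) \<subseteq> S" "hd W \<notin> S" "set W \<inter> set (butlast Y) = {}"
              "\<forall>u w. u \<notin> S \<longrightarrow> (u, w) \<in> A \<longrightarrow> w \<in> S \<longrightarrow> w \<in> set (tl W)"
              using construct[OF D v degK _ k2pos] by fastforce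
            define V' where "V' = V - S"
            define A' where "A' = A \<inter> (V' \<times> V')"
            have D': "digraph V' A'" using sub_digraph[OF D] by (simp add: V'_def A'_def)
            have Wne: "W \<noteq> []" using YW(6) by auto
            have v3: "hd W \<in> V'" using YW(8,13) Wne by (auto simp: V'_def)
            have cardT: "card (set (tl W)) = k2" using YW(6,7) distinct_card[of "tl W"] by (simp add: distinct_tl)
            have deg': "\<forall>w\<in>V'. sum_list rest2 \<le> outdeg A' w"
            proof
              fix w assume w: "w \<in> V'"
              have "\<forall>x. (w, x) \<in> A \<longrightarrow> x \<in> S \<longrightarrow> x \<in> set (tl W)"
                using YW(15) w by (auto simp: V'_def)
              then have "outdeg A w - card (set (tl W)) \<le> outdeg A' w"
                using outdeg_sub[OF D, of w S "set (tl W)"] w by (simp add: V'_def A'_def)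
              then show "sum_list rest2 \<le> outdeg A' w" using degK w cardT by (force simp: V'_def)
            qed
            have posr2: "\<forall>i. 1 \<le> i \<and> i < length rest2 \<longrightarrow> rest2 ! i > 0"
              using posr Cons by fastforce
            have "length rest2 < n" using lenr Cons by simp
            then have "G V' A' rest2 (hd W)" using less.IH D' v3 posr2 deg' by blast
            then obtain ksR xsR where R: "length ksR = length rest2"
              "\<forall>i < length rest2. if even i then ksR ! i \<ge> rest2 ! i else ksR ! i = rest2 ! i"
              "is_P_path V' A' ksR xsR" "hd xsR = hd W"
              unfolding G_def by blast
            have Rne: "xsR \<noteq> []" using R(3) by (auto simp: is_P_path_def)
            define a where "a = length Y - 1"
            have p1: "pok A (replicate a True) Y" using pok_dpath[OF YW(5,1)] by (simp add: a_def)
            have p2: "pok A (replicate k2 False) (rev W)" using pok_rev[OF YW(9) Wne] YW(6) by simp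
            have p3: "pok A (edge_dirs ksR) xsR"
              using pok_mono[OF is_P_path_pok[OF R(3)]] by (auto simp: A'_def)
            have j1: "last Y = hd (rev W)" using YW(10) Wne by (simp add: hd_rev)
            have p12: "pok A (replicate a True @ replicate k2 False) (Y @ tl (rev W))"
              by (rule pok_append[OF p1 p2 j1])
            have l12: "last (Y @ tl (rev W)) = hd W"
              using last_append_tl[OF YW(1) _ j1] Wne by (simp add: last_rev)
            have p123: "pok A ((replicate a True @ replicate k2 False) @ edge_dirs ksR)
                 ((Y @ tl (rev W)) @ tl xsR)"
              by (rule pok_append[OF p12 p3]) (use l12 R(4) in simp)
            define xs where "xs = Y @ tl (rev W) @ tl xsR"
            have pk: "pok A (edge_dirs (a # k2 # ksR)) xs"
              using p123 by (simp add: xs_def edge_dirs_Cons2)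
            have setR: "set (tl xsR) \<subseteq> V' - {hd W}"
            proof -
              have "distinct xsR" "set xsR \<subseteq> V'" using R(3) by (auto simp: is_P_path_def)
              then show ?thesis using R(4) Rne by (cases xsR) auto
            qed
            have tlrevW: "set (tl (rev W)) = set (butlast W)"
              by (metis butlast_rev rev_rev_ident set_rev)
            have Ysplit: "set Y = set (butlast Y) \<union> {last Y}"
              using YW(1) by (metis append_butlast_last_id set_append empty_set set_simps(2) Un_insert_right Un_empty_right)
            have Wsplit: "set (butlast W) \<subseteq> set (tl W) \<union> {hd W}"
              using Wne by (cases W) (auto dest: in_set_butlastD)
            have lastW: "last W \<in> set (tl W)" using YW(6) Wne k2pos
              by (cases W) (auto)
            have lastWnot: "last W \<notin> set (butlast W)" using YW(7) Wne
              by (metis append_butlast_last_id distinct_append disjoint_iff list.set_intros(1))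
            have "distinct xs"
            proof -
              have d1: "distinct Y" by (rule YW(3))
              have d2: "distinct (tl (rev W))" using YW(7) by (simp add: distinct_tl)
              have d3: "distinct (tl xsR)" using R(3) by (simp add: is_P_path_def distinct_tl)
              have i12: "set Y \<inter> set (tl (rev W)) = {}"
                using Ysplit tlrevW YW(14,10) lastWnot in_set_butlastD by fastforce
              have i13: "set Y \<inter> set (tl xsR) = {}"
                using Ysplit setR YW(11,10,12) lastW by (auto simp: V'_def)
              have i23: "set (tl (rev W)) \<inter> set (tl xsR) = {}"
                using tlrevW Wsplit setR YW(12) by (auto simp: V'_def)
              show ?thesis using d1 d2 d3 i12 i13 i23 by (auto simp: xs_def)
            qed
            moreover have "set xs \<subseteq> V"
              using YW(4,8) setR by (auto simp: xs_def V'_def tlrevW dest: in_set_butlastD)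
            ultimately have "is_P_path V A (a # k2 # ksR) xs" using pk by (intro pok_is_P_path)
            moreover have "hd xs = v" using YW(1,2) by (simp add: xs_def)
            moreover have "\<forall>i < length (0 # rest). if even i then (a # k2 # ksR) ! i \<ge> (0 # rest) ! i
                else (a # k2 # ksR) ! i = (0 # rest) ! i"
            proof (intro allI impI)
              fix i assume i: "i < length (0 # rest)"
              show "if even i then (a # k2 # ksR) ! i \<ge> (0 # rest) ! i else (a # k2 # ksR) ! i = (0 # rest) ! i"
              proof (cases "i < 2")
                case True
                then have "i = 0 \<or> i = 1" by auto
                then show ?thesis using Cons by auto
              next
                case False
                then obtain i' where "i = Suc (Suc i')" by (metis add_2_eq_Suc le_Suc_ex not_less)
                then show ?thesis using R(2) Cons i by auto
              qed
            qed
            ultimately show ?thesis unfolding G_def using R(1) Cons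
              by (intro exI[of _ "a # k2 # ksR"] exI[of _ xs]) auto
          qed

        qed
      next
        case (Suc k)
        show ?case
        proof (intro allI impI)
          fix V :: "'a set" and A v
          assume D: "digraph V A" and v: "v \<in> V" and deg: "\<forall>u\<in>V. sum_list (Suc k # rest) \<le> outdeg A u"
          show "G V A (Suc k # rest) v"
          proof -
          have "1 \<le> outdeg A v" using deg v by fastforce
          then have "{w. (v, w) \<in> A} \<noteq> {}" unfolding outdeg_def by (metis card.empty not_one_le_zero)
          then obtain u where vu: "(v, u) \<in> A" by blast
          define V' where "V' = V - {v}"
          define A' where "A' = A \<inter> (V' \<times> V')"
          have D': "digraph V' A'" using sub_digraph[OF D] by (simp add: V'_def A'_def)
          have u: "u \<in> V'" using vu D by (auto simp: digraph_def V'_def)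
          have deg': "\<forall>w\<in>V'. sum_list (k # rest) \<le> outdeg A' w"
          proof
            fix w assume w: "w \<in> V'"
            have "outdeg A w - card {v} \<le> outdeg A' w"
              using outdeg_sub[OF D, of w "{v}" "{v}"] w by (simp add: V'_def A'_def)
            then show "sum_list (k # rest) \<le> outdeg A' w" using deg w by (force simp: V'_def)
          qed
          have "G V' A' (k # rest) u" using Suc.IH D' u deg' by blast
          then obtain ks'' xs where H: "length ks'' = length (k # rest)"
            "\<forall>i < length (k # rest). if even i then ks'' ! i \<ge> (k # rest) ! i else ks'' ! i = (k # rest) ! i"
            "is_P_path V' A' ks'' xs" "hd xs = u"
            unfolding G_def by blast
          obtain c r where cr: "ks'' = c # r" using H(1) by (cases ks'') auto
          have xsne: "xs \<noteq> []" using H(3) by (auto simp: is_P_path_def)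
          have p1: "pok A [True] [v, u]" using vu by (simp add: pok_def)
          have p2: "pok A (edge_dirs ks'') xs"
            using pok_mono[OF is_P_path_pok[OF H(3)]] by (auto simp: A'_def)
          have "pok A ([True] @ edge_dirs ks'') ([v, u] @ tl xs)"
            using pok_append[OF p1 p2] H(4) xsne by simp
          moreover have "[v, u] @ tl xs = v # xs" using H(4) xsne by (cases xs) auto
          ultimately have "pok A (edge_dirs (Suc c # r)) (v # xs)"
            by (simp add: cr edge_dirs_Suc)
          moreover have "distinct (v # xs)" "set (v # xs) \<subseteq> V"
            using H(3) v by (auto simp: is_P_path_def V'_def)
          ultimately have "is_P_path V A (Suc c # r) (v # xs)" by (rule pok_is_P_path)
          moreover have "\<forall>i < length (Suc k # rest). if even i then (Suc c # r) ! i \<ge> (Suc k # rest) ! i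
                else (Suc c # r) ! i = (Suc k # rest) ! i"
          proof (intro allI impI)
            fix i assume i: "i < length (Suc k # rest)"
            show "if even i then (Suc c # r) ! i \<ge> (Suc k # rest) ! i else (Suc c # r) ! i = (Suc k # rest) ! i"
            proof (cases i)
              case 0 then show ?thesis using H(2) cr by fastforce
            next
              case (Suc i') then show ?thesis using H(2) cr i by fastforce
            qed
          qed
          ultimately show "G V A (Suc k # rest) v" unfolding G_def using H(1) cr
            by (intro exI[of _ "Suc c # r"] exI[of _ "v # xs"]) auto
          qed
        qed
      qed
      then show ?thesis using D v deg Cons by blast
    qed
  qed
qed


theorem theorem19:
  fixes V :: "'a set" and A :: "('a \<times> 'a) set" and ks :: "nat list" and v :: 'a
  assumes "digraph V A"
    and "length ks \<ge> 1"
    and "\<forall>i. 1 \<le> i \<and> i < length ks \<longrightarrow> ks ! i > 0"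
    and "v \<in> V"
    and "min_outdeg V A \<ge> sum_list ks"
  shows "\<exists>ks' xs. length ks' = length ks \<and>
           (\<forall>i < length ks. if even i then ks' ! i \<ge> ks ! i else ks' ! i = ks ! i) \<and>
           is_P_path V A ks' xs \<and> hd xs = v"
proof -
  have fin: "finite V" using assms(1) by (simp add: digraph_def)
  have deg: "\<forall>u\<in>V. sum_list ks \<le> outdeg A u"
  proof
    fix u assume "u \<in> V"
    then have "min_outdeg V A \<le> outdeg A u" unfolding min_outdeg_def using fin by simp
    then show "sum_list ks \<le> outdeg A u" using assms(5) by simp
  qed
  note M = main[of "length ks", THEN spec[of _ ks], THEN spec[of _ V], THEN spec[of _ A], THEN spec[of _ v]]
  have "G V A ks v" using M assms(1,3,4) deg by simp
  then show ?thesis unfolding G_def .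
qed

end
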